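(* Let $t,n\geq 1$ be integers and let $x,y\in\{0,1\}^{tn}$, with coordinates of $y$ indexed $0,1,\ldots,tn-1$. There exists $i<n$ such that $\mathsf{Rot}^{it}(y)<_{\mathrm{lex}}x$ if and only if at least one of the following holds: (1) there exists $w\in L_x$ such that $w$ appears as a contiguous substring of $y$ starting at a coordinate $j$ with $j\equiv 0\pmod t$; (2) there exist strings $w_1,w_2$ such that $w_1w_2\in L_x$, $w_2$ is a prefix of $y$, $w_1$ is a suffix of $y$, and $|w_1|\equiv 0\pmod t$.
   Context: $\mathsf{Rot}^k(y)$ denotes the string obtained from $y$ by cyclically rotating it rightwards by $k$ positions. $<_{\mathrm{lex}}$ is the lexicographic order on binary strings of equal length with $0<1$. For $x\in\{0,1\}^{m}$, the set of witnesses is $L_x=\{s0 : s1\text{ is a prefix of }x\}$. *)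

theory Defs
  imports Main "HOL-Library.Sublist"
begin

text \<open>Binary strings are lists of booleans, with False = 0 and True = 1.\<close>

definition Rot :: "nat \<Rightarrow> bool list \<Rightarrow> bool list" where
  "Rot k y = (let m = length y; r = k mod m in drop (m - r) y @ take (m - r) y)"

definition lex_less :: "bool list \<Rightarrow> bool list \<Rightarrow> bool" where
  "lex_less u v = (length u = length v \<and>
     (\<exists>p a b. u = p @ [False] @ a \<and> v = p @ [True] @ b))"

text \<open>Witness set L_x = { s0 : s1 is a prefix of x }.\<close>
definition witnesses :: "bool list \<Rightarrow> bool list set" where
  "witnesses x = {s @ [False] | s. prefix (s @ [True]) x}"

end

theory Submission
  imports Defs
begin

lemma lexA:
  assumes "length R = length x"
  shows "lex_less R x \<longleftrightarrow> (\<exists>w\<in>witnesses x. prefix w R)"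
  using assms unfolding lex_less_def witnesses_def prefix_def
  by fastforce

lemma wit_len:
  assumes "w \<in> witnesses x" shows "length w \<le> length x" "w \<noteq> []"
  using assms unfolding witnesses_def prefix_def by auto

lemma rot_lt: "k < length y \<Longrightarrow> Rot k y = drop (length y - k) y @ take (length y - k) y"
  unfolding Rot_def Let_def by simp

lemma rot0: "Rot 0 y = y" unfolding Rot_def Let_def by simp

lemma rot_set:
  fixes t n :: nat
  assumes "t \<ge> 1" "n \<ge> 1" "length y = t * n"
  shows "(\<exists>i<n. P (Rot (i * t) y)) \<longleftrightarrow>
         (\<exists>j<t*n. j mod t = 0 \<and> P (drop j y @ take j y))"
proof
  assume "\<exists>i<n. P (Rot (i * t) y)"
  then obtain i where i: "i < n" "P (Rot (i * t) y)" by (elim exE conjE)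
  have lt: "i * t < t * n" using i(1) assms(1) by (metis mult.commute mult_less_cancel1 less_le_trans zero_less_one)
  have R: "Rot (i*t) y = drop (t*n - i*t) y @ take (t*n - i*t) y"
    using rot_lt[of "i*t" y] lt assms(3) by simp
  show "\<exists>j<t*n. j mod t = 0 \<and> P (drop j y @ take j y)"
  proof (cases "i = 0")
    case True
    then have "P (drop 0 y @ take 0 y)" using i(2) rot0 by simp
    moreover have "0 < t*n" using assms(1,2) by simp
    moreover have "(0::nat) mod t = 0" by simp
    ultimately have "0 < t*n \<and> 0 mod t = 0 \<and> P (drop 0 y @ take 0 y)" by (intro conjI)
    then show ?thesis by (rule exI)
  next
    case False
    have e: "t*n - i*t = t * (n - i)" by (simp add: diff_mult_distrib2 mult.commute)
    have a1: "t*n - i*t < t*n" using False lt by simp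
    have a2: "(t*n - i*t) mod t = 0" unfolding e by simp
    have "t*n - i*t < t*n \<and> (t*n - i*t) mod t = 0 \<and> P (drop (t*n - i*t) y @ take (t*n - i*t) y)"
      using a1 a2 R i(2) by simp
    then show ?thesis by (rule exI)
  qed
next
  assume "\<exists>j<t*n. j mod t = 0 \<and> P (drop j y @ take j y)"
  then obtain j where j: "j < t*n" "j mod t = 0" "P (drop j y @ take j y)" by (elim exE conjE)
  obtain q where q: "j = t * q" using j(2) by (metis mod_eq_0_iff_dvd dvd_def)
  have qn: "q < n" using j(1) unfolding q by (metis mult_less_cancel1)
  show "\<exists>i<n. P (Rot (i * t) y)"
  proof (cases "q = 0")
    case True
    have "j = 0" using True q by simp
    then have "P (Rot (0 * t) y)" using j(3) rot0 by simp
    moreover have "0 < n" using assms(2) by simp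
    ultimately have "0 < n \<and> P (Rot (0 * t) y)" by (intro conjI)
    then show ?thesis by (rule exI)
  next
    case False
    have nq: "n - q < n" using False qn by simp
    then have lt: "(n - q) * t < t * n" using assms(1) by (metis mult.commute mult_less_cancel1 less_le_trans zero_less_one)
    have e1: "(n-q)*t = t*n - t*q" by (simp add: diff_mult_distrib2 mult.commute)
    have e2: "t*q \<le> t*n" using qn by simp
    have e: "t*n - (n-q)*t = j" using e1 e2 q by simp
    have "Rot ((n-q)*t) y = drop j y @ take j y"
      using rot_lt[of "(n-q)*t" y] assms(3) lt e by simp
    then have "n - q < n \<and> P (Rot ((n-q)*t) y)" using j(3) nq by simp
    then show ?thesis by (rule exI)
  qed
qed

lemma H1: "prefix w (a @ b) \<Longrightarrow> length w \<le> length a \<Longrightarrow> prefix w a"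
  by (metis prefix_length_prefix prefix_append prefix_order.refl)
lemma H2: "prefix w (a @ b) \<Longrightarrow> \<not> length w \<le> length a \<Longrightarrow> \<exists>w2. w = a @ w2 \<and> prefix w2 b"
  by (auto simp: prefix_append dest: prefix_length_le)
lemma H3: "prefix w2 y \<Longrightarrow> length w2 \<le> j \<Longrightarrow> prefix w2 (take j y)"
  by (auto simp: prefix_def)
lemma H4: "prefix w (drop j y) \<Longrightarrow> take (length w) (drop j y) = w"
  by (auto simp: prefix_def)
lemma H5: "take (length w) (drop j y) = w \<Longrightarrow> prefix w (drop j y @ z)"
  by (metis prefix_append take_is_prefix)
theorem lemma9:
  fixes t n :: nat and x y :: "bool list"
  assumes "t \<ge> 1" and "n \<ge> 1"
    and "length x = t * n" and "length y = t * n"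
  shows "(\<exists>i<n. lex_less (Rot (i * t) y) x) \<longleftrightarrow>
    ((\<exists>w \<in> witnesses x. \<exists>j. j mod t = 0 \<and> j + length w \<le> length y \<and>
         take (length w) (drop j y) = w) \<or>
     (\<exists>w1 w2. w1 @ w2 \<in> witnesses x \<and> prefix w2 y \<and> suffix w1 y \<and>
         length w1 mod t = 0))" (is "?L \<longleftrightarrow> ?R")
proof -
  have lenR: "\<And>k. length (Rot k y) = length x" using assms(3,4) unfolding Rot_def by (simp add: Let_def)
  have "?L \<longleftrightarrow> (\<exists>i<n. \<exists>w\<in>witnesses x. prefix w (Rot (i * t) y))"
    using lexA[OF lenR] by simp
  also have "\<dots> \<longleftrightarrow> (\<exists>j<t*n. j mod t = 0 \<and> (\<exists>w\<in>witnesses x. prefix w (drop j y @ take j y)))"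
    by (rule rot_set[OF assms(1,2,4)])
  also have "\<dots> \<longleftrightarrow> ?R"
  proof
    assume "\<exists>j<t*n. j mod t = 0 \<and> (\<exists>w\<in>witnesses x. prefix w (drop j y @ take j y))"
    then obtain j where j0: "j < t*n" "j mod t = 0" "\<exists>w\<in>witnesses x. prefix w (drop j y @ take j y)"
      by (elim exE conjE)
    then obtain w where wj: "w \<in> witnesses x" "prefix w (drop j y @ take j y)" by (elim bexE)
    show ?R
    proof (cases "length w \<le> length (drop j y)")
      case True
      then have p: "prefix w (drop j y)" using wj(2) H1 by blast
      then have tk: "take (length w) (drop j y) = w" by (rule H4)
      have "j + length w \<le> length y" using True j0(1) assms(4) by simp
      then have "\<exists>w \<in> witnesses x. \<exists>j. j mod t = 0 \<and> j + length w \<le> length y \<and>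
         take (length w) (drop j y) = w"
        apply (intro bexI[of _ w] exI[of _ j] conjI)
        using wj(1) j0(2) tk by simp_all
      then show ?R by (rule disjI1)
    next
      case False
      then obtain w2 where w2: "w = drop j y @ w2" "prefix w2 (take j y)" using wj(2) H2 by blast
      have "prefix w2 y" using w2(2) by (metis prefix_order.order_trans take_is_prefix)
      moreover have "suffix (drop j y) y" by (simp add: suffix_drop)
      moreover have "length (drop j y) mod t = 0" using j0(1,2) assms(4)
        by (simp add: mod_eq_0_iff_dvd dvd_diff_nat)
      moreover have "drop j y @ w2 \<in> witnesses x" using w2(1) wj(1) by simp
      ultimately have "\<exists>w1 w2. w1 @ w2 \<in> witnesses x \<and> prefix w2 y \<and> suffix w1 y \<and>
         length w1 mod t = 0" by (intro exI[of _ "drop j y"] exI[of _ w2] conjI)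
      then show ?R by (rule disjI2)
    qed
  next
    assume "?R"
    then show "\<exists>j<t*n. j mod t = 0 \<and> (\<exists>w\<in>witnesses x. prefix w (drop j y @ take j y))"
    proof
      assume "\<exists>w \<in> witnesses x. \<exists>j. j mod t = 0 \<and> j + length w \<le> length y \<and>
         take (length w) (drop j y) = w"
      then obtain w where w0: "w \<in> witnesses x" and
        "\<exists>j. j mod t = 0 \<and> j + length w \<le> length y \<and> take (length w) (drop j y) = w"
        by (elim bexE)
      then obtain j where c: "j mod t = 0 \<and> j + length w \<le> length y \<and> take (length w) (drop j y) = w"
        by (elim exE)
      have w: "w \<in> witnesses x" "j mod t = 0" "j + length w \<le> length y"
        "take (length w) (drop j y) = w"
        using w0 conjunct1[OF c] conjunct1[OF conjunct2[OF c]] conjunct2[OF conjunct2[OF c]] by -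
      have "w \<noteq> []" using wit_len(2) w(1) by blast
      then have "j < t*n" using w(3) assms(4) by (cases w) auto
      moreover have "prefix w (drop j y @ take j y)" using w(4) by (rule H5)
      ultimately show ?thesis using w(1,2) by (intro exI[of _ j] conjI bexI[of _ w])
    next
      assume "\<exists>w1 w2. w1 @ w2 \<in> witnesses x \<and> prefix w2 y \<and> suffix w1 y \<and>
         length w1 mod t = 0"
      then obtain w1 w2 where c: "w1 @ w2 \<in> witnesses x \<and> prefix w2 y \<and> suffix w1 y \<and>
         length w1 mod t = 0" by (elim exE)
      have w: "w1 @ w2 \<in> witnesses x" "prefix w2 y" "suffix w1 y" "length w1 mod t = 0"
        using conjunct1[OF c] conjunct1[OF conjunct2[OF c]] conjunct1[OF conjunct2[OF conjunct2[OF c]]]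
          conjunct2[OF conjunct2[OF conjunct2[OF c]]] by -
      show ?thesis
      proof (cases "w1 = []")
        case True
        have "0 < t*n" using assms(1,2) by simp
        moreover have "prefix w2 (drop 0 y @ take 0 y)" using w(2) by simp
        moreover have "w2 \<in> witnesses x" using w(1) True by simp
        ultimately show ?thesis using w(1) by (intro exI[of _ 0] conjI bexI[of _ w2]) simp_all
      next
        case False
        obtain zs where zs: "y = zs @ w1" using w(3) by (auto simp: suffix_def)
        define j where "j = length zs"
        have ly: "length zs + length w1 = t*n" using zs assms(4) by (metis length_append)
        have jlt: "j < t*n" using False ly unfolding j_def by (cases w1) auto
        have "t dvd length zs + length w1" using ly by simp
        moreover have "t dvd length w1" using w(4) by (simp add: mod_eq_0_iff_dvd)
        ultimately have "t dvd length zs" by (simp add: dvd_add_left_iff)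
        then have jm: "j mod t = 0" unfolding j_def by simp
        have d: "drop j y = w1" using zs unfolding j_def by simp
        have "length (w1 @ w2) \<le> t*n" using wit_len(1)[OF w(1)] assms(3) by simp
        then have lw2: "length w2 \<le> j" using ly unfolding j_def by simp
        have "prefix w2 (take j y)" using w(2) lw2 by (rule H3)
        then have "prefix (w1 @ w2) (drop j y @ take j y)" using d by simp
        then show ?thesis using jlt jm w(1) by (intro exI[of _ j] conjI bexI[of _ "w1 @ w2"])
      qed
    qed
  qed
  finally show ?thesis .
qed

end
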